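(* For every $\lambda>0$, the function $R_\lambda(e)=\partial_eF(\lambda,e)$ is strictly increasing and strictly concave on $I_\lambda$.
   Context: Let $\gamma>0$; let $a_1,\dots,a_p>0$ with weights $\omega_i>0$, $\sum_i\omega_i=1$, and $b_1,\dots,b_n>0$ with weights $\pi_j>0$, $\sum_j\pi_j=1$; put $a^*=\max_i a_i$, $b^*=\max_j b_j$. Define $G(e)=\sum_{j=1}^n\frac{b_j\pi_j}{1+\gamma b_j e}$, $J=\{e: e>-1/(\gamma b^* )\}$, and for $\lambda>0$, $I_\lambda=\{e\in J: G(e)<\lambda/a^*\}$. Define $F(\lambda,e)=e-\sum_{i=1}^p\frac{a_i\omega_i}{a_iG(e)-\lambda}$. *)

theory Defs
  imports "HOL-Analysis.Analysis"
begin

definition strict_concave_on :: "real set \<Rightarrow> (real \<Rightarrow> real) \<Rightarrow> bool" where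
  "strict_concave_on S f \<longleftrightarrow>
     (\<forall>x\<in>S. \<forall>y\<in>S. x \<noteq> y \<longrightarrow> (\<forall>t. 0 < t \<and> t < 1 \<longrightarrow>
        (1 - t) * f x + t * f y < f ((1 - t) * x + t * y)))"

definition G :: "real \<Rightarrow> nat \<Rightarrow> (nat \<Rightarrow> real) \<Rightarrow> (nat \<Rightarrow> real) \<Rightarrow> real \<Rightarrow> real" where
  "G \<gamma> n b \<pi> e = (\<Sum>j=1..n. b j * \<pi> j / (1 + \<gamma> * b j * e))"

definition F :: "real \<Rightarrow> nat \<Rightarrow> (nat \<Rightarrow> real) \<Rightarrow> (nat \<Rightarrow> real) \<Rightarrow> nat \<Rightarrow> (nat \<Rightarrow> real) \<Rightarrow> (nat \<Rightarrow> real)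
                  \<Rightarrow> real \<Rightarrow> real \<Rightarrow> real" where
  "F \<gamma> p a \<omega> n b \<pi> lam e = e - (\<Sum>i=1..p. a i * \<omega> i / (a i * G \<gamma> n b \<pi> e - lam))"

definition J :: "real \<Rightarrow> nat \<Rightarrow> (nat \<Rightarrow> real) \<Rightarrow> real set" where
  "J \<gamma> n b = {e. e > - 1 / (\<gamma> * Max (b ` {1..n}))}"

definition I :: "real \<Rightarrow> nat \<Rightarrow> (nat \<Rightarrow> real) \<Rightarrow> nat \<Rightarrow> (nat \<Rightarrow> real) \<Rightarrow> (nat \<Rightarrow> real)
                  \<Rightarrow> real \<Rightarrow> real set" where
  "I \<gamma> p a n b \<pi> lam = {e \<in> J \<gamma> n b. G \<gamma> n b \<pi> e < lam / Max (a ` {1..p})}"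

definition R :: "real \<Rightarrow> nat \<Rightarrow> (nat \<Rightarrow> real) \<Rightarrow> (nat \<Rightarrow> real) \<Rightarrow> nat \<Rightarrow> (nat \<Rightarrow> real) \<Rightarrow> (nat \<Rightarrow> real)
                  \<Rightarrow> real \<Rightarrow> real \<Rightarrow> real" where
  "R \<gamma> p a \<omega> n b \<pi> lam e = deriv (\<lambda>x. F \<gamma> p a \<omega> n b \<pi> lam x) e"

end

theory Submission
  imports Defs
begin


definition Gk :: "real \<Rightarrow> nat \<Rightarrow> (nat \<Rightarrow> real) \<Rightarrow> (nat \<Rightarrow> real) \<Rightarrow> nat \<Rightarrow> real \<Rightarrow> real" where
  "Gk \<gamma> n b \<pi> k e = (\<Sum>j=1..n. (-1)^k * fact k * \<gamma>^k * b j^(k+1) * \<pi> j / (1 + \<gamma> * b j * e)^(k+1))"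

lemma term_deriv:
  assumes "1 + g * B * e \<noteq> 0"
  shows "((\<lambda>e. C / (1 + g * B * e)^(k+1)) has_real_derivative
          (- C * real (k+1) * g * B / (1 + g * B * e)^(k+2))) (at e)"
proof -
  define d where "d = 1 + g * B * e"
  have d: "d \<noteq> 0" using assms d_def by simp
  have "((\<lambda>e. C / (1 + g * B * e)^(k+1)) has_real_derivative
     (0 * d^(k+1) - C * (real (k+1) * d^k * (g * B))) / (d^(k+1) * d^(k+1))) (at e)"
    unfolding d_def
    by (rule DERIV_divide) (auto intro!: derivative_eq_intros simp: assms, cases k, auto simp: algebra_simps)
  moreover have "(0 * d^(k+1) - C * (real (k+1) * d^k * (g * B))) / (d^(k+1) * d^(k+1))
      = - C * real (k+1) * g * B / d^(k+2)"
  proof -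
    have e1: "d^(k+1) * d^(k+1) = d^k * d^(k+2)" by (simp add: power_add[symmetric])
    show ?thesis unfolding e1 using d by (simp add: field_simps)
  qed
  ultimately show ?thesis by (simp add: d_def)
qed

lemma Gk_deriv:
  assumes "\<forall>j\<in>{1..n}. 1 + \<gamma> * b j * e \<noteq> 0"
  shows "(Gk \<gamma> n b \<pi> k has_real_derivative Gk \<gamma> n b \<pi> (Suc k) e) (at e)"
proof -
  have "((\<lambda>e. \<Sum>j=1..n. (-1)^k * fact k * \<gamma>^k * b j^(k+1) * \<pi> j / (1 + \<gamma> * b j * e)^(k+1))
     has_real_derivative (\<Sum>j=1..n. - ((-1)^k * fact k * \<gamma>^k * b j^(k+1) * \<pi> j) * real (k+1) * \<gamma> * b j / (1 + \<gamma> * b j * e)^(k+2))) (at e)"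
    by (rule DERIV_sum, rule term_deriv) (use assms in auto)
  moreover have "(\<Sum>j=1..n. - ((-1)^k * fact k * \<gamma>^k * b j^(k+1) * \<pi> j) * real (k+1) * \<gamma> * b j / (1 + \<gamma> * b j * e)^(k+2))
     = Gk \<gamma> n b \<pi> (Suc k) e"
    unfolding Gk_def by (rule sum.cong) (auto simp: algebra_simps)
  ultimately show ?thesis unfolding Gk_def by simp
qed

lemma G_Gk: "G \<gamma> n b \<pi> = Gk \<gamma> n b \<pi> 0"
  by (auto simp: G_def Gk_def fun_eq_iff)


lemma F_term_deriv:
  assumes "(g0 has_real_derivative g1 e) (at e)" "A * g0 e - L \<noteq> 0"
  shows "((\<lambda>e. C / (A * g0 e - L)) has_real_derivative (- C * A * g1 e / (A * g0 e - L)^2)) (at e)"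
proof -
  define E where "E = A * g0 e - L"
  have E: "E \<noteq> 0" using assms E_def by simp
  have nz: "A * g0 e \<noteq> L" using E E_def by simp
  show ?thesis
    apply (rule derivative_eq_intros assms refl | simp add: nz)+
    using E unfolding E_def[symmetric] by (simp add: field_simps power2_eq_square)
qed

lemma T_deriv:
  assumes "(g0 has_real_derivative g1 e) (at e)" "(g1 has_real_derivative g2 e) (at e)" "A * g0 e - L \<noteq> 0"
  shows "((\<lambda>e. C * g1 e / (A * g0 e - L)^2) has_real_derivative
     (C * (g2 e / (A * g0 e - L)^2 - 2 * A * (g1 e)^2 / (A * g0 e - L)^3))) (at e)"
proof -
  define E where "E = A * g0 e - L"
  have E: "E \<noteq> 0" using assms E_def by simp
  have nz: "A * g0 e \<noteq> L" using E E_def by simp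
  show ?thesis
    apply (rule derivative_eq_intros assms refl | simp add: nz)+
    using E unfolding E_def[symmetric] by (simp add: field_simps power2_eq_square power3_eq_cube eval_nat_numeral)
qed

lemma T1_deriv:
  assumes "(g0 has_real_derivative g1 e) (at e)" "(g1 has_real_derivative g2 e) (at e)"
     "(g2 has_real_derivative g3 e) (at e)" "A * g0 e - L \<noteq> 0"
  shows "((\<lambda>e. C * (g2 e / (A * g0 e - L)^2 - 2 * A * (g1 e)^2 / (A * g0 e - L)^3)) has_real_derivative
     (C * (g3 e / (A * g0 e - L)^2 - 6 * A * g1 e * g2 e / (A * g0 e - L)^3
           + 6 * A^2 * (g1 e)^3 / (A * g0 e - L)^4))) (at e)"
proof -
  define E where "E = A * g0 e - L"
  have E: "E \<noteq> 0" using assms E_def by simp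
  have nz: "A * g0 e \<noteq> L" using E E_def by simp
  show ?thesis
    apply (rule derivative_eq_intros assms refl | simp add: nz)+
    using E unfolding E_def[symmetric] by (simp add: field_simps power2_eq_square power3_eq_cube eval_nat_numeral)
qed



lemma mvt_S:
  assumes S0: "\<forall>x\<in>S. \<forall>y\<in>S. \<forall>z. x\<le>z \<and> z\<le>y \<longrightarrow> z\<in>S"
    and D0: "\<forall>x\<in>S. (f has_real_derivative f' x) (at x)"
    and xy: "x \<in> S" "y \<in> S" "x < y"
  shows "\<exists>z. x < z \<and> z < y \<and> z \<in> S \<and> f y - f x = (y - x) * f' z"
proof -
  have S: "\<And>x y z. x\<in>S \<Longrightarrow> y\<in>S \<Longrightarrow> x\<le>z \<Longrightarrow> z\<le>y \<Longrightarrow> z\<in>S" using S0 by blast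
  have D: "\<And>x. x\<in>S \<Longrightarrow> (f has_real_derivative f' x) (at x)" using D0 by blast
  have "\<And>t. x \<le> t \<Longrightarrow> t \<le> y \<Longrightarrow> (f has_real_derivative f' t) (at t)"
    using S D xy by blast
  from MVT2[OF xy(3) this] obtain z where "x < z" "z < y" "f y - f x = (y - x) * f' z" by blast
  then show ?thesis using S[of x y z] xy by auto
qed

lemma smono_deriv:
  assumes S0: "\<forall>x\<in>S. \<forall>y\<in>S. \<forall>z. x\<le>z \<and> z\<le>y \<longrightarrow> z\<in>S"
    and D0: "\<forall>x\<in>S. (f has_real_derivative f' x) (at x)"
    and P0: "\<forall>x\<in>S. f' x > 0"
  shows "strict_mono_on S f"
proof (rule strict_mono_onI)
  have P: "\<And>x. x\<in>S \<Longrightarrow> f' x > 0" using P0 by blast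
  fix x y assume xy: "x \<in> S" "y \<in> S" "x < y"
  from mvt_S[OF S0 D0 xy] obtain z where "z \<in> S" "f y - f x = (y - x) * f' z" by blast
  moreover have "(y - x) * f' z > 0" using P[OF \<open>z\<in>S\<close>] xy by simp
  ultimately show "f x < f y" by simp
qed

lemma sconc_aux:
  assumes S0: "\<forall>x\<in>S. \<forall>y\<in>S. \<forall>z. x\<le>z \<and> z\<le>y \<longrightarrow> z\<in>S"
    and D0: "\<forall>x\<in>S. (f has_real_derivative f' x) (at x)"
    and M0: "\<forall>x\<in>S. \<forall>y\<in>S. x < y \<longrightarrow> f' y < f' x"
    and xy: "x \<in> S" "y \<in> S" "x < y" and t: "0 < t" "t < 1"
  shows "(1 - t) * f x + t * f y < f ((1 - t) * x + t * y)"
proof -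
  have S: "\<And>x y z. x\<in>S \<Longrightarrow> y\<in>S \<Longrightarrow> x\<le>z \<Longrightarrow> z\<le>y \<Longrightarrow> z\<in>S" using S0 by blast
  have M: "\<And>x y. x\<in>S \<Longrightarrow> y\<in>S \<Longrightarrow> x < y \<Longrightarrow> f' y < f' x" using M0 by blast
  define z where "z = (1 - t) * x + t * y"
  have z1: "z - x = t * (y - x)" and z2: "y - z = (1 - t) * (y - x)" unfolding z_def by (simp_all add: algebra_simps)
  have p1: "t * (y - x) > 0" and p2: "(1 - t) * (y - x) > 0" using t xy by auto
  have "x < z" using p1 z1 by linarith
  have "z < y" using p2 z2 by linarith
  have zS: "z \<in> S" using S[OF xy(1) xy(2)] \<open>x<z\<close> \<open>z<y\<close> by auto
  from mvt_S[OF S0 D0 xy(1) zS \<open>x<z\<close>] obtain u where u: "u < z" "u \<in> S" "f z - f x = (z - x) * f' u" by blast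
  from mvt_S[OF S0 D0 zS xy(2) \<open>z<y\<close>] obtain v where v: "z < v" "v \<in> S" "f y - f z = (y - z) * f' v" by blast
  have "f' v < f' u" using M[OF u(2) v(2)] u v by simp
  have "(1 - t) * f x + t * f y - f z = t * (f y - f z) - (1 - t) * (f z - f x)" by (simp add: algebra_simps)
  also have "\<dots> = t * (1 - t) * (y - x) * (f' v - f' u)" by (simp only: u(3) v(3) z1 z2) (simp add: algebra_simps)
  also have "\<dots> < 0" proof -
    have "t * (1 - t) * (y - x) > 0" using t xy by auto
    then show ?thesis using \<open>f' v < f' u\<close> by (simp add: mult_pos_neg)
  qed
  finally show ?thesis unfolding z_def by simp
qed

lemma sconc_deriv:
  assumes S0: "\<forall>x\<in>S. \<forall>y\<in>S. \<forall>z. x\<le>z \<and> z\<le>y \<longrightarrow> z\<in>S"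
    and D0: "\<forall>x\<in>S. (f has_real_derivative f' x) (at x)"
    and M0: "\<forall>x\<in>S. \<forall>y\<in>S. x < y \<longrightarrow> f' y < f' x"
  shows "strict_concave_on S (f :: real \<Rightarrow> real)"
  unfolding strict_concave_on_def
proof (intro ballI impI allI)
  fix x y :: real and t :: real assume xy: "x \<in> S" "y \<in> S" "x \<noteq> y" and t: "0 < t \<and> t < 1"
  show "(1 - t) * f x + t * f y < f ((1 - t) * x + t * y)"
  proof (cases "x < y")
    case True then show ?thesis using sconc_aux[OF S0 D0 M0] xy t by blast
  next
    case False
    then have "y < x" using xy by auto
    from sconc_aux[OF S0 D0 M0 xy(2) xy(1) this, of "1 - t"] t
    show ?thesis by (simp add: algebra_simps)
  qed
qed



lemma Gk_sign:
  assumes "n \<ge> 1" "\<forall>j\<in>{1..n}. 1 + \<gamma> * b j * e > 0" "\<gamma> > 0"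
    "\<forall>j\<in>{1..n}. b j > 0" "\<forall>j\<in>{1..n}. \<pi> j > 0"
  shows "(-1)^k * Gk \<gamma> n b \<pi> k e > 0"
proof -
  have "(-1)^k * Gk \<gamma> n b \<pi> k e = (\<Sum>j=1..n. fact k * \<gamma>^k * b j^(k+1) * \<pi> j / (1 + \<gamma> * b j * e)^(k+1))"
    unfolding Gk_def sum_distrib_left
    by (rule sum.cong) (auto simp: power_mult_distrib[symmetric])
  also have "\<dots> > 0"
    by (rule sum_pos) (use assms in auto)
  finally show ?thesis .
qed

lemma bracket1:
  fixes g1 g2 E A C :: real
  assumes "g1 < 0" "g2 > 0" "E < 0" "A > 0" "C > 0"
  shows "C * (g2 / E^2 - 2 * A * g1^2 / E^3) > 0"
proof -
  have "E^3 < 0" using assms by (simp add: odd_power_less_zero)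
  moreover have "g1^2 > 0" using assms by simp
  ultimately have t1: "2 * A * g1^2 / E^3 < 0" using assms by (simp add: divide_pos_neg)
  have t2: "g2 / E^2 > 0" using assms by simp
  have "g2 / E^2 - 2 * A * g1^2 / E^3 > 0" using t1 t2 by linarith
  then show ?thesis using assms by simp
qed

lemma bracket2:
  fixes g1 g2 g3 E A C :: real
  assumes "g1 < 0" "g2 > 0" "g3 < 0" "E < 0" "A > 0" "C > 0"
  shows "C * (g3 / E^2 - 6 * A * g1 * g2 / E^3 + 6 * A^2 * g1^3 / E^4) < 0"
proof -
  have e3: "E^3 < 0" using assms by (simp add: odd_power_less_zero)
  have "g1 * g2 < 0" using assms by (simp add: mult_neg_pos)
  then have "6 * A * g1 * g2 < 0" using assms by (simp add: mult_pos_neg)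
  then have t2: "6 * A * g1 * g2 / E^3 > 0" using e3 by (simp add: divide_neg_neg)
  have "g1^3 < 0" using assms by (simp add: odd_power_less_zero)
  then have "6 * A^2 * g1^3 < 0" using assms by (simp add: mult_pos_neg)
  moreover have "E^4 > 0" using assms by simp
  ultimately have t3: "6 * A^2 * g1^3 / E^4 < 0" by (simp add: divide_neg_pos)
  have t1: "g3 / E^2 < 0" using assms by (simp add: divide_neg_pos)
  have "g3 / E^2 - 6 * A * g1 * g2 / E^3 + 6 * A^2 * g1^3 / E^4 < 0" using t1 t2 t3 by linarith
  then show ?thesis using assms by (simp add: mult_pos_neg)
qed



theorem proposition3p14:
  fixes \<gamma> :: real and p n :: nat and a \<omega> b \<pi> :: "nat \<Rightarrow> real"
  assumes "\<gamma> > 0"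
    and "\<forall>i\<in>{1..p}. a i > 0" and "\<forall>i\<in>{1..p}. \<omega> i > 0" and "(\<Sum>i=1..p. \<omega> i) = 1"
    and "\<forall>j\<in>{1..n}. b j > 0" and "\<forall>j\<in>{1..n}. \<pi> j > 0" and "(\<Sum>j=1..n. \<pi> j) = 1"
  shows "\<forall>lam>0. strict_mono_on (I \<gamma> p a n b \<pi> lam) (R \<gamma> p a \<omega> n b \<pi> lam)
              \<and> strict_concave_on (I \<gamma> p a n b \<pi> lam) (R \<gamma> p a \<omega> n b \<pi> lam)"
proof (intro allI impI)
  fix lam :: real assume lam: "lam > 0"
  note gpos = assms(1) and apos = assms(2) and wpos = assms(3) and bpos = assms(5) and ppos = assms(6)
  have n1: "n \<ge> 1" using assms(7) by (cases n) auto
  have p1: "p \<ge> 1" using assms(4) by (cases p) auto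
  define B where "B = Max (b ` {1..n})"
  define A where "A = Max (a ` {1..p})"
  have bB: "\<forall>j\<in>{1..n}. b j \<le> B" unfolding B_def by auto
  have aA: "\<forall>i\<in>{1..p}. a i \<le> A" unfolding A_def by auto
  have Bpos: "B > 0" using bB bpos n1 by (meson atLeastAtMost_iff le_refl less_le_trans)
  have Apos: "A > 0" using aA apos p1 by (meson atLeastAtMost_iff le_refl less_le_trans)
  let ?S = "I \<gamma> p a n b \<pi> lam"
  define g where "g = Gk \<gamma> n b \<pi>"
  have Sdef: "?S = {e. e > - 1 / (\<gamma> * B) \<and> g 0 e < lam / A}"
    unfolding I_def J_def A_def B_def g_def G_Gk by auto
  have dpos: "\<forall>j\<in>{1..n}. 1 + \<gamma> * b j * e > 0" if "e > - 1 / (\<gamma> * B)" for e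
  proof
    fix j assume j: "j \<in> {1..n}"
    have "e * (\<gamma> * B) > -1" using that gpos Bpos by (simp add: field_simps)
    show "1 + \<gamma> * b j * e > 0"
    proof (cases "e \<ge> 0")
      case True
      have "b j > 0" using bpos j by auto
      then have "\<gamma> * b j * e \<ge> 0" using True gpos by simp
      then show ?thesis by linarith
    next
      case False
      have "\<gamma> * b j * e \<ge> \<gamma> * B * e" using False bB j gpos
        by (simp add: mult_left_mono mult_right_mono_neg)
      then show ?thesis using \<open>e * (\<gamma> * B) > -1\<close> by (simp add: algebra_simps)
    qed
  qed
  have Jd: "\<forall>j\<in>{1..n}. 1 + \<gamma> * b j * e > 0" if "e \<in> ?S" for e
    using dpos that unfolding Sdef by auto
  have gsign: "(-1)^k * g k e > 0" if "e \<in> ?S" for e k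
    unfolding g_def by (rule Gk_sign) (use n1 Jd[OF that] gpos bpos ppos in auto)
  have g0p: "g 0 e > 0" and g1n: "g 1 e < 0" and g2p: "g 2 e > 0" and g3n: "g 3 e < 0" if "e \<in> ?S" for e
    using gsign[OF that, of 0] gsign[OF that, of 1] gsign[OF that, of 2] gsign[OF that, of 3] by auto
  have Eneg: "a i * g 0 e - lam < 0" if "e \<in> ?S" "i \<in> {1..p}" for e i
  proof -
    have "g 0 e < lam / A" using that(1) Sdef by auto
    then have "A * g 0 e < lam" using Apos by (simp add: field_simps)
    moreover have "a i * g 0 e \<le> A * g 0 e" using aA that g0p[OF that(1)] by (simp add: mult_right_mono)
    ultimately show ?thesis by simp
  qed
  have gder: "(g k has_real_derivative g (Suc k) e) (at e)" if "e \<in> ?S" for e k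
    unfolding g_def by (rule Gk_deriv) (use Jd[OF that] in auto)
  have s23: "Suc 2 = (3::nat)" by simp
  have gd0: "(g 0 has_real_derivative g 1 e) (at e)" and gd1: "(g 1 has_real_derivative g 2 e) (at e)"
    and gd2: "(g 2 has_real_derivative g 3 e) (at e)" if "e \<in> ?S" for e
    using gder[OF that, of 0] gder[OF that, of 1] gder[OF that, of 2] s23
    by (simp_all only: One_nat_def[symmetric] Suc_1 s23)
  define R0 where "R0 e = 1 + (\<Sum>i=1..p. a i^2 * \<omega> i * g 1 e / (a i * g 0 e - lam)^2)" for e
  define R1 where "R1 e = (\<Sum>i=1..p. a i^2 * \<omega> i * (g 2 e / (a i * g 0 e - lam)^2 - 2 * a i * (g 1 e)^2 / (a i * g 0 e - lam)^3))" for e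
  define R2 where "R2 e = (\<Sum>i=1..p. a i^2 * \<omega> i * (g 3 e / (a i * g 0 e - lam)^2 - 6 * a i * g 1 e * g 2 e / (a i * g 0 e - lam)^3
           + 6 * (a i)^2 * (g 1 e)^3 / (a i * g 0 e - lam)^4))" for e
  have RR0: "R \<gamma> p a \<omega> n b \<pi> lam e = R0 e" if "e \<in> ?S" for e
  proof -
    have Fe: "F \<gamma> p a \<omega> n b \<pi> lam = (\<lambda>e. e - (\<Sum>i=1..p. a i * \<omega> i / (a i * g 0 e - lam)))"
      unfolding F_def g_def G_Gk by auto
    have sd: "((\<lambda>e. a i * \<omega> i / (a i * g 0 e - lam)) has_real_derivative
       (- (a i * \<omega> i) * a i * g 1 e / (a i * g 0 e - lam)^2)) (at e)" if "i \<in> {1..p}" for i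
      by (rule F_term_deriv[of "g 0" "g 1" e, OF gd0[OF \<open>e \<in> ?S\<close>]]) (use Eneg[OF \<open>e \<in> ?S\<close> that] in simp)
    have "((\<lambda>e. e - (\<Sum>i=1..p. a i * \<omega> i / (a i * g 0 e - lam))) has_real_derivative
       1 - (\<Sum>i=1..p. - (a i * \<omega> i) * a i * g 1 e / (a i * g 0 e - lam)^2)) (at e)"
      by (rule DERIV_diff[OF DERIV_ident DERIV_sum]) (rule sd)
    moreover have "1 - (\<Sum>i=1..p. - (a i * \<omega> i) * a i * g 1 e / (a i * g 0 e - lam)^2) = R0 e"
    proof -
      have "(\<Sum>i=1..p. - (a i * \<omega> i) * a i * g 1 e / (a i * g 0 e - lam)^2)
          = - (\<Sum>i=1..p. a i^2 * \<omega> i * g 1 e / (a i * g 0 e - lam)^2)"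
        unfolding sum_negf[symmetric] by (rule sum.cong) (auto simp: power2_eq_square)
      then show ?thesis unfolding R0_def by simp
    qed
    ultimately have "((\<lambda>e. e - (\<Sum>i=1..p. a i * \<omega> i / (a i * g 0 e - lam))) has_real_derivative R0 e) (at e)"
      by simp
    then show ?thesis unfolding R_def Fe by (rule DERIV_imp_deriv)
  qed
  have R0d: "(R0 has_real_derivative R1 e) (at e)" if "e \<in> ?S" for e
  proof -
    have sd: "((\<lambda>e. a i^2 * \<omega> i * g 1 e / (a i * g 0 e - lam)^2) has_real_derivative
       (a i^2 * \<omega> i * (g 2 e / (a i * g 0 e - lam)^2 - 2 * a i * (g 1 e)^2 / (a i * g 0 e - lam)^3))) (at e)"
      if "i \<in> {1..p}" for i
      by (rule T_deriv[of "g 0" "g 1" e "g 2", OF gd0[OF \<open>e \<in> ?S\<close>] gd1[OF \<open>e \<in> ?S\<close>]])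
         (use Eneg[OF \<open>e \<in> ?S\<close> that] in simp)
    have "((\<lambda>e. 1 + (\<Sum>i=1..p. a i^2 * \<omega> i * g 1 e / (a i * g 0 e - lam)^2)) has_real_derivative
       0 + R1 e) (at e)"
      unfolding R1_def by (rule DERIV_add[OF DERIV_const DERIV_sum]) (rule sd)
    then show ?thesis unfolding R0_def[abs_def] by simp
  qed
  have R1d: "(R1 has_real_derivative R2 e) (at e)" if "e \<in> ?S" for e
  proof -
    have sd: "((\<lambda>e. a i^2 * \<omega> i * (g 2 e / (a i * g 0 e - lam)^2 - 2 * a i * (g 1 e)^2 / (a i * g 0 e - lam)^3)) has_real_derivative
       (a i^2 * \<omega> i * (g 3 e / (a i * g 0 e - lam)^2 - 6 * a i * g 1 e * g 2 e / (a i * g 0 e - lam)^3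
           + 6 * (a i)^2 * (g 1 e)^3 / (a i * g 0 e - lam)^4))) (at e)"
      if "i \<in> {1..p}" for i
      by (rule T1_deriv[of "g 0" "g 1" e "g 2" "g 3", OF gd0[OF \<open>e \<in> ?S\<close>] gd1[OF \<open>e \<in> ?S\<close>] gd2[OF \<open>e \<in> ?S\<close>]])
         (use Eneg[OF \<open>e \<in> ?S\<close> that] in simp)
    show ?thesis unfolding R1_def[abs_def] R2_def by (rule DERIV_sum) (rule sd)
  qed
  have cpos: "(a i)^2 * \<omega> i > 0" if "i \<in> {1..p}" for i
  proof -
    have "a i > 0" "\<omega> i > 0" using apos wpos that by auto
    then show ?thesis by simp
  qed
  have R1p: "R1 e > 0" if "e \<in> ?S" for e
  proof -
    have "a i^2 * \<omega> i * (g 2 e / (a i * g 0 e - lam)^2 - 2 * a i * (g 1 e)^2 / (a i * g 0 e - lam)^3) > 0"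
      if "i \<in> {1..p}" for i
      by (rule bracket1) (use g1n[OF \<open>e \<in> ?S\<close>] g2p[OF \<open>e \<in> ?S\<close>] Eneg[OF \<open>e \<in> ?S\<close> that] cpos[OF that] apos that in auto)
    then show ?thesis unfolding R1_def by (intro sum_pos) (use p1 in auto)
  qed
  have R2n: "- R2 e > 0" if "e \<in> ?S" for e
  proof -
    have "a i^2 * \<omega> i * (g 3 e / (a i * g 0 e - lam)^2 - 6 * a i * g 1 e * g 2 e / (a i * g 0 e - lam)^3
           + 6 * (a i)^2 * (g 1 e)^3 / (a i * g 0 e - lam)^4) < 0"
      if "i \<in> {1..p}" for i
      by (rule bracket2) (use g1n[OF \<open>e \<in> ?S\<close>] g2p[OF \<open>e \<in> ?S\<close>] g3n[OF \<open>e \<in> ?S\<close>] Eneg[OF \<open>e \<in> ?S\<close> that] cpos[OF that] apos that in auto)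
    then have "0 < (\<Sum>i=1..p. - (a i^2 * \<omega> i * (g 3 e / (a i * g 0 e - lam)^2 - 6 * a i * g 1 e * g 2 e / (a i * g 0 e - lam)^3
           + 6 * (a i)^2 * (g 1 e)^3 / (a i * g 0 e - lam)^4)))" by (intro sum_pos) (use p1 in auto)
    then show ?thesis unfolding R2_def sum_negf by simp
  qed
  have Sint: "\<forall>x\<in>?S. \<forall>y\<in>?S. \<forall>z. x\<le>z \<and> z\<le>y \<longrightarrow> z\<in>?S"
  proof (intro ballI allI impI)
    fix x y z assume x: "x \<in> ?S" and y: "y \<in> ?S" and z: "x \<le> z \<and> z \<le> y"
    have zJ: "z > - 1 / (\<gamma> * B)" using x z Sdef by auto
    have "g 0 z \<le> g 0 x" unfolding g_def Gk_def
    proof (rule sum_mono)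
      fix j assume j: "j \<in> {1..n}"
      have d1: "1 + \<gamma> * b j * x > 0" using Jd[OF x] j by auto
      have "1 + \<gamma> * b j * x \<le> 1 + \<gamma> * b j * z" using z gpos bpos j by (simp add: mult_left_mono)
      then show "(-1)^0 * fact 0 * \<gamma>^0 * b j^(0+1) * \<pi> j / (1 + \<gamma> * b j * z)^(0+1)
          \<le> (-1)^0 * fact 0 * \<gamma>^0 * b j^(0+1) * \<pi> j / (1 + \<gamma> * b j * x)^(0+1)"
      proof -
        have "b j * \<pi> j \<ge> 0" using bpos ppos j by (simp add: less_imp_le)
        moreover have "0 < (1 + \<gamma> * b j * z) * (1 + \<gamma> * b j * x)" using d1 \<open>1 + \<gamma> * b j * x \<le> 1 + \<gamma> * b j * z\<close> by simp
        ultimately show ?thesis using \<open>1 + \<gamma> * b j * x \<le> 1 + \<gamma> * b j * z\<close> by (simp add: divide_left_mono)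
      qed
    qed
    then show "z \<in> ?S" using x zJ Sdef by auto
  qed
  have m0: "strict_mono_on ?S R0"
    by (rule smono_deriv[OF Sint]) (use R0d R1p in auto)
  have m1: "strict_mono_on ?S (\<lambda>e. - R1 e)"
    by (rule smono_deriv[OF Sint, where f' = "\<lambda>e. - R2 e"]) (use R1d R2n in \<open>auto intro: DERIV_minus\<close>)
  have c0: "strict_concave_on ?S R0"
    by (rule sconc_deriv[OF Sint, where f' = R1]) (use R0d m1 in \<open>auto simp: strict_mono_on_def\<close>)
  show "strict_mono_on ?S (R \<gamma> p a \<omega> n b \<pi> lam) \<and> strict_concave_on ?S (R \<gamma> p a \<omega> n b \<pi> lam)"
  proof
    show "strict_mono_on ?S (R \<gamma> p a \<omega> n b \<pi> lam)"
      using m0 RR0 by (simp add: strict_mono_on_def)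
    show "strict_concave_on ?S (R \<gamma> p a \<omega> n b \<pi> lam)"
      using c0 RR0 unfolding strict_concave_on_def
    proof (intro ballI impI allI)
      fix x y t :: real assume c: "\<forall>x\<in>?S. \<forall>y\<in>?S. x \<noteq> y \<longrightarrow> (\<forall>t. 0 < t \<and> t < 1 \<longrightarrow> (1 - t) * R0 x + t * R0 y < R0 ((1 - t) * x + t * y))"
        and xy: "x \<in> ?S" "y \<in> ?S" "x \<noteq> y" and t: "0 < t \<and> t < 1"
      have "(1 - t) * x + t * y \<in> ?S"
      proof (cases "x \<le> y")
        case True
        have h: "t * (y - x) \<ge> 0" "(1 - t) * (y - x) \<ge> 0" using True t by auto
        have "(1 - t) * x + t * y = x + t * (y - x)" "(1 - t) * x + t * y = y - (1 - t) * (y - x)"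
          by (simp_all add: algebra_simps)
        then have "x \<le> (1 - t) * x + t * y" "(1 - t) * x + t * y \<le> y" using h by linarith+
        then show ?thesis using Sint xy by blast
      next
        case False
        have h: "t * (x - y) \<ge> 0" "(1 - t) * (x - y) \<ge> 0" using False t by auto
        have "(1 - t) * x + t * y = x - t * (x - y)" "(1 - t) * x + t * y = y + (1 - t) * (x - y)"
          by (simp_all add: algebra_simps)
        then have "y \<le> (1 - t) * x + t * y" "(1 - t) * x + t * y \<le> x" using h by linarith+
        then show ?thesis using Sint xy by blast
      qed
      then show "(1 - t) * R \<gamma> p a \<omega> n b \<pi> lam x + t * R \<gamma> p a \<omega> n b \<pi> lam y
           < R \<gamma> p a \<omega> n b \<pi> lam ((1 - t) * x + t * y)"
        using c xy t RR0 by simp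
    qed
  qed
qed

end
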